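(* Let $q\ge 3$ and $k\ge 2$ be integers. Then $$SO(S_{q,1,k})=(2qk-2k-4)\sqrt{2}+4k\sqrt{5}.$$
   Context: For a finite simple graph $G$, $SO(G)=\sum_{uv\in E(G)}\sqrt{d_u^2+d_v^2}$, where $d_u$ is the degree of $u$ in $G$ (the Sombor index). The spiro-chain $S_{q,1,k}$ is the chain of $k$ disjoint copies $G_1,\ldots,G_k$ of the cycle $C_q$ with respect to adjacent vertices $x_i,y_i\in V(G_i)$; i.e. it is obtained from the disjoint union of the $k$ cycles by identifying $y_i$ with $x_{i+1}$ for $i=1,\ldots,k-1$. *)

theory Defs
  imports Complex_Main
begin

text \<open>Finite simple graphs are represented by their edge set: a set of
  two-element vertex sets. The degree of a vertex is the number of edges containing it.\<close>

definition degree :: "'a set set \<Rightarrow> 'a \<Rightarrow> nat" where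
  "degree E v = card {e \<in> E. v \<in> e}"

text \<open>Sombor index: sum over edges uv of sqrt(d_u^2 + d_v^2); for an edge e = {u,v}
  with u \<noteq> v, the inner sum over the vertices of e is d_u^2 + d_v^2.\<close>

definition sombor_index :: "'a set set \<Rightarrow> real" where
  "sombor_index E = (\<Sum>e\<in>E. sqrt (\<Sum>v\<in>e. (real (degree E v))^2))"

definition cycle_copy_V :: "nat \<Rightarrow> nat \<Rightarrow> (nat \<times> nat) set" where
  "cycle_copy_V q i = {i} \<times> {0..<q}"

definition cycle_copy_E :: "nat \<Rightarrow> nat \<Rightarrow> (nat \<times> nat) set set" where
  "cycle_copy_E q i = {{(i, j), (i, (j + 1) mod q)} | j. j < q}"

text \<open>Gluing map: x_i = (i,0) and y_i = (i,1) are adjacent in G_i; y_i is identified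
  with x_{i+1} for i = 1..k-1 (every vertex is sent to its class representative).\<close>

definition spiro_glue :: "nat \<Rightarrow> nat \<times> nat \<Rightarrow> nat \<times> nat" where
  "spiro_glue k = (\<lambda>(i, j). if j = 1 \<and> i < k then (i + 1, 0) else (i, j))"

definition spiro_V :: "nat \<Rightarrow> nat \<Rightarrow> (nat \<times> nat) set" where
  "spiro_V q k = spiro_glue k ` (\<Union>i\<in>{1..k}. cycle_copy_V q i)"

definition spiro_E :: "nat \<Rightarrow> nat \<Rightarrow> (nat \<times> nat) set set" where
  "spiro_E q k = (\<lambda>e. spiro_glue k ` e) ` (\<Union>i\<in>{1..k}. cycle_copy_E q i)"

end

theory Submission
  imports Defs
begin

definition sq :: "nat \<Rightarrow> nat \<Rightarrow> nat" where "sq q j = (if j + 1 = q then 0 else j + 1)"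
definition ed :: "nat \<Rightarrow> nat \<Rightarrow> nat \<times> nat \<Rightarrow> (nat \<times> nat) set" where
  "ed q k p = {spiro_glue k (fst p, snd p), spiro_glue k (fst p, sq q (snd p))}"

lemma mod_sq: "j < q \<Longrightarrow> Suc j mod q = sq q j"
  unfolding sq_def by auto

lemma E_eq: "spiro_E q k = ed q k ` ({1..k} \<times> {0..<q})"
  unfolding spiro_E_def cycle_copy_E_def ed_def
proof (intro set_eqI iffI)
  fix e assume "e \<in> (\<lambda>e. spiro_glue k ` e) ` (\<Union>i\<in>{1..k}. {{(i, j), (i, (j + 1) mod q)} |j. j < q})"
  then obtain i j where "i \<in> {1..k}" "j < q" "e = spiro_glue k ` {(i, j), (i, (j + 1) mod q)}" by blast
  then show "e \<in> (\<lambda>p. {spiro_glue k (fst p, snd p), spiro_glue k (fst p, sq q (snd p))}) ` ({1..k} \<times> {0..<q})"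
    by (intro image_eqI[of _ _ "(i,j)"]) (auto simp: mod_sq)
next
  fix e assume "e \<in> (\<lambda>p. {spiro_glue k (fst p, snd p), spiro_glue k (fst p, sq q (snd p))}) ` ({1..k} \<times> {0..<q})"
  then obtain i j where "i \<in> {1..k}" "j < q" and e: "e = {spiro_glue k (i, j), spiro_glue k (i, sq q j)}" by auto
  show "e \<in> (\<lambda>e. spiro_glue k ` e) ` (\<Union>i\<in>{1..k}. {{(i, j), (i, (j + 1) mod q)} |j. j < q})"
  proof (rule image_eqI[of _ _ "{(i, j), (i, (j + 1) mod q)}"])
    show "{(i, j), (i, (j + 1) mod q)} \<in> (\<Union>i\<in>{1..k}. {{(i, j), (i, (j + 1) mod q)} |j. j < q})"
      using \<open>i \<in> {1..k}\<close> \<open>j < q\<close> by blast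
  qed (use \<open>j < q\<close> e in \<open>simp add: mod_sq\<close>)
qed

lemma glue: "spiro_glue k (i,j) = (if j = 1 \<and> i < k then (i + 1, 0) else (i, j))"
  unfolding spiro_glue_def by simp

lemma inj: assumes "q \<ge> 3" shows "inj_on (ed q k) ({1..k} \<times> {0..<q})"
  unfolding inj_on_def ed_def using assms
  by (auto simp: glue sq_def doubleton_eq_iff split: if_splits)

lemma mem_ed: "q \<ge> 3 \<Longrightarrow> j < q \<Longrightarrow> (x,y) \<in> ed q k (i,j) \<longleftrightarrow>
   (j = 1 \<and> i < k \<and> x = i + 1 \<and> y = 0) \<or> (\<not> (j = 1 \<and> i < k) \<and> x = i \<and> y = j) \<or>
   (j = 0 \<and> i < k \<and> x = i + 1 \<and> y = 0) \<or> (j + 1 = q \<and> x = i \<and> y = 0) \<or>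
   (j + 1 < q \<and> \<not> (j = 0 \<and> i < k) \<and> x = i \<and> y = j + 1)"
  unfolding ed_def glue sq_def by auto

lemma vA: assumes "q \<ge> 3" "2 \<le> a" "a \<le> k"
  shows "{p \<in> {1..k} \<times> {0..<q}. (a,0) \<in> ed q k p} = {(a,0),(a,q-1),(a-1,0),(a-1,1)}"
proof (intro set_eqI iffI)
  fix p assume "p \<in> {p \<in> {1..k} \<times> {0..<q}. (a,0) \<in> ed q k p}"
  then obtain i j where p: "p = (i,j)" "i \<in> {1..k}" "j < q" "(a,0) \<in> ed q k (i,j)" by auto
  with assms(1) have "(j = 1 \<and> i < k \<and> a = i + 1) \<or> (\<not> (j = 1 \<and> i < k) \<and> a = i \<and> 0 = j) \<or>
   (j = 0 \<and> i < k \<and> a = i + 1) \<or> (j + 1 = q \<and> a = i)" by (simp add: mem_ed)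
  then show "p \<in> {(a,0),(a,q-1),(a-1,0),(a-1,1)}" using p(1) by auto
next
  fix p assume "p \<in> {(a,0),(a,q-1),(a-1,0),(a-1,1)}"
  then show "p \<in> {p \<in> {1..k} \<times> {0..<q}. (a,0) \<in> ed q k p}"
    using assms by (auto simp: mem_ed)
qed

lemma vB: assumes "q \<ge> 3" "1 \<le> a" "a \<le> k" "b < q" "\<not>(b = 1 \<and> a < k)" "\<not> (b = 0 \<and> 2 \<le> a)"
  shows "{p \<in> {1..k} \<times> {0..<q}. (a,b) \<in> ed q k p} = {(a, if b = 0 then q - 1 else b - 1),(a,b)}"
proof (intro set_eqI iffI)
  fix p assume "p \<in> {p \<in> {1..k} \<times> {0..<q}. (a,b) \<in> ed q k p}"
  then obtain i j where p: "p = (i,j)" "i \<in> {1..k}" "j < q" "(a,b) \<in> ed q k (i,j)" by auto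
  with assms(1) have "(j = 1 \<and> i < k \<and> a = i + 1 \<and> b = 0) \<or> (\<not> (j = 1 \<and> i < k) \<and> a = i \<and> b = j) \<or>
   (j = 0 \<and> i < k \<and> a = i + 1 \<and> b = 0) \<or> (j + 1 = q \<and> a = i \<and> b = 0) \<or>
   (j + 1 < q \<and> \<not> (j = 0 \<and> i < k) \<and> a = i \<and> b = j + 1)" by (simp add: mem_ed)
  then show "p \<in> {(a, if b = 0 then q - 1 else b - 1),(a,b)}" using p(1,2) assms by auto
next
  fix p assume "p \<in> {(a, if b = 0 then q - 1 else b - 1),(a,b)}"
  then show "p \<in> {p \<in> {1..k} \<times> {0..<q}. (a,b) \<in> ed q k p}"
    using assms by (auto simp: mem_ed)
qed

lemma deg_ed: assumes "q \<ge> 3"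
  shows "degree (spiro_E q k) v = card {p \<in> {1..k} \<times> {0..<q}. v \<in> ed q k p}"
proof -
  have "{e \<in> spiro_E q k. v \<in> e} = ed q k ` {p \<in> {1..k} \<times> {0..<q}. v \<in> ed q k p}"
    unfolding E_eq by auto
  moreover have "inj_on (ed q k) {p \<in> {1..k} \<times> {0..<q}. v \<in> ed q k p}"
    using inj[OF assms] by (rule inj_on_subset) auto
  ultimately show ?thesis unfolding degree_def by (simp add: card_image)
qed

definition w :: "nat \<Rightarrow> nat \<Rightarrow> nat \<Rightarrow> real" where
  "w k i j = (if (j = 0 \<and> 2 \<le> i) \<or> (j = 1 \<and> i < k) then 4 else 2)"

lemma deg_w: assumes "q \<ge> 3" "1 \<le> i" "i \<le> k" "j < q"
  shows "real (degree (spiro_E q k) (spiro_glue k (i,j))) = w k i j"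
proof (cases "(j = 0 \<and> 2 \<le> i) \<or> (j = 1 \<and> i < k)")
  case True
  then obtain a where a: "spiro_glue k (i,j) = (a,0)" "2 \<le> a" "a \<le> k"
    using assms by (auto simp: glue)
  have "card {(a,0),(a,q-1),(a-1,0),(a-1,1)} = 4" using a assms by auto
  then show ?thesis using True a vA[OF assms(1) a(2,3)] deg_ed[OF assms(1)] by (simp add: w_def)
next
  case False
  then have g: "spiro_glue k (i,j) = (i,j)" by (auto simp: glue)
  have "card {(i, if j = 0 then q - 1 else j - 1),(i,j)} = 2" using assms by auto
  then show ?thesis using False g vB[OF assms(1-4)] deg_ed[OF assms(1)] by (simp add: w_def)
qed

lemma sq_lt: "q \<ge> 3 \<Longrightarrow> j < q \<Longrightarrow> sq q j < q" by (auto simp: sq_def)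

lemma term_eq: assumes "q \<ge> 3" "1 \<le> i" "i \<le> k" "j < q"
  shows "(\<Sum>v\<in>ed q k (i,j). (real (degree (spiro_E q k) v))^2) = (w k i j)^2 + (w k i (sq q j))^2"
proof -
  have ne: "spiro_glue k (i,j) \<noteq> spiro_glue k (i, sq q j)"
    using assms by (auto simp: glue sq_def)
  show ?thesis using ne unfolding ed_def
    by (simp add: deg_w[OF assms] deg_w[OF assms(1-3) sq_lt[OF assms(1,4)]])
qed

lemma inner: assumes "q \<ge> 3" "1 \<le> i" "i \<le> k"
  shows "(\<Sum>j<q. sqrt ((w k i j)^2 + (w k i (sq q j))^2)) =
    sqrt ((w k i 0)^2 + (w k i 1)^2) + sqrt ((w k i 1)^2 + 4) + sqrt (4 + (w k i 0)^2) + (real q - 3) * sqrt 8"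
proof -
  have U: "{..<q} = insert 0 (insert 1 (insert (q-1) {2..<q-1}))" using assms by auto
  have mid: "(\<Sum>j\<in>{2..<q-1}. sqrt ((w k i j)^2 + (w k i (sq q j))^2)) = (\<Sum>j\<in>{2..<q-1}. sqrt 8)"
    by (rule sum.cong) (auto simp: w_def sq_def)
  have c: "card {2..<q-1} = q - 3" by simp
  have r: "real (q - 3) = real q - 3" using assms by simp
  have "(\<Sum>j\<in>{2..<q-1}. sqrt ((w k i j)^2 + (w k i (sq q j))^2)) = (real q - 3) * sqrt 8"
    unfolding mid using c r by simp
  moreover have "sq q 0 = 1" "sq q 1 = 2" "sq q (q-1) = 0" using assms by (auto simp: sq_def)
  moreover have "w k i (q-1) = 2" "w k i 2 = 2" using assms by (auto simp: w_def)
  moreover have "q - 1 \<noteq> 0" "q - 1 \<noteq> 1" "(0::nat) \<noteq> 1" using assms by auto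
  ultimately show ?thesis unfolding U
    by (simp add: mid c)
qed

theorem mainTheorem8:
  fixes q k :: nat
  assumes "q \<ge> 3" and "k \<ge> 2"
  shows "sombor_index (spiro_E q k) =
           (2 * real q * real k - 2 * real k - 4) * sqrt 2 + 4 * real k * sqrt 5"
proof -
  let ?I = "{1..k} \<times> {0..<q}"
  define F where "F i = sqrt ((w k i 0)^2 + (w k i 1)^2) + sqrt ((w k i 1)^2 + 4) + sqrt (4 + (w k i 0)^2) + (real q - 3) * sqrt 8" for i
  have "sombor_index (spiro_E q k) = (\<Sum>e\<in>ed q k ` ?I. sqrt (\<Sum>v\<in>e. (real (degree (spiro_E q k) v))^2))"
    unfolding sombor_index_def by (rule sum.cong[OF E_eq]) simp
  also have "\<dots> = (\<Sum>p\<in>?I. sqrt (\<Sum>v\<in>ed q k p. (real (degree (spiro_E q k) v))^2))"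
    using sum.reindex[OF inj[OF assms(1)]] by simp
  also have "\<dots> = (\<Sum>p\<in>?I. sqrt ((w k (fst p) (snd p))^2 + (w k (fst p) (sq q (snd p)))^2))"
    by (rule sum.cong) (auto simp: term_eq[OF assms(1)])
  also have "\<dots> = (\<Sum>i\<in>{1..k}. \<Sum>j<q. sqrt ((w k i j)^2 + (w k i (sq q j))^2))"
    by (simp add: sum.cartesian_product lessThan_atLeast0 case_prod_beta)
  also have "\<dots> = (\<Sum>i\<in>{1..k}. F i)"
    by (rule sum.cong) (auto simp: inner[OF assms(1)] F_def)
  also have "\<dots> = F 1 + F k + (\<Sum>i\<in>{2..<k}. F i)"
  proof -
    have "{1..k} = insert 1 (insert k {2..<k})" using assms by auto
    then show ?thesis using assms by simp
  qed
  also have "(\<Sum>i\<in>{2..<k}. F i) = (\<Sum>i\<in>{2..<k}. sqrt 32 + 2 * sqrt 20 + (real q - 3) * sqrt 8)"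
    by (rule sum.cong) (auto simp: F_def w_def)
  also have "\<dots> = (real k - 2) * (sqrt 32 + 2 * sqrt 20 + (real q - 3) * sqrt 8)"
    using assms by (simp add: of_nat_diff)
  also have "F 1 = 2 * sqrt 20 + (real q - 2) * sqrt 8" using assms by (simp add: F_def w_def algebra_simps)
  also have "F k = 2 * sqrt 20 + (real q - 2) * sqrt 8" using assms by (simp add: F_def w_def algebra_simps)
  also have "sqrt 8 = 2 * sqrt 2" using real_sqrt_mult[of 4 2] by simp
  also have "sqrt 20 = 2 * sqrt 5" using real_sqrt_mult[of 4 5] by simp
  also have "sqrt 32 = 4 * sqrt 2" using real_sqrt_mult[of 16 2] by simp
  finally show ?thesis by (simp add: algebra_simps)
qed

end
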